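(* Let $G,H$ be non-discrete unimodular lcsc compactly generated groups and let $(\Omega,X_G,X_H,\mu)$ be a measure equivalence coupling between them satisfying properties (P1) and (P3) below. Then there is a constant $K'>0$ (independent of $f$ and $p$) such that for every $p\ge1$ and every $f\in\mathrm{L}^p(H)$ with support of finite measure, $$\int_{X_G}\|f_x\|_p^p\,d\nu_G(x)\ge K'\|f\|_p^p.$$
   Context: Measure equivalence coupling: measure space $(\Omega,\mu)$ with commuting measure-preserving $G$- and $H$-actions (written $\ast$), subsets $X_G,X_H$ with finite measures $\nu_G,\nu_H$ such that $(g,x)\mapsto g\ast x$ is a measure space isomorphism $(G\times X_G,\lambda_G\otimes\nu_G)\to(\Omega,\mu)$ and likewise for $H\times X_H$. Induced action: $g\cdot x$ is the unique point of $(H\ast g\ast x)\cap X_H$ ($g\in G,x\in X_H$), cocycle $\alpha(g,x)\ast g\ast x=g\cdot x$; symmetrically $H\curvearrowright X_G$ with cocycle $\beta$. $R^G_Y(x)=\{g: g\cdot x\in Y\}$, $R^H_Y(x)=\{h:h\cdot x\in Y\}$. (P1): there is $C>0$ with $\nu_G|_{X_G\cap X_H}=C\nu_H|_{X_G\cap X_H}$ and $\nu_G(X_G\cap X_H)>0$. (P3): for a.e. $x\in X_H$, $\alpha(\cdot,x)\colon(R^G_{X_G\cap X_H}(x),\lambda_G)\to(\alpha(R^G_{X_G\cap X_H}(x),x),\lambda_H)$ is measure preserving, and for a.e. $x\in X_G$, $\beta(\cdot,x)\colon(R^H_{X_G\cap X_H}(x),\lambda_H)\to(\beta(R^H_{X_G\cap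 X_H}(x),x),\lambda_G)$ is measure preserving. Given $f\colon H\to\mathbb{R}$, $\tilde f(h\ast x)=f(h^{-1})$ ($h\in H$, $x\in X_H$) and $f_x(g)=\tilde f(g\ast x)$ for $x\in X_G$, $g\in G$. *)

theory Defs
  imports "HOL-Analysis.Analysis"
begin

text \<open>Groups are written additively (class group_add is not necessarily commutative);
  the inverse of g is -g.\<close>

definition add_subgroup :: "'g::group_add set \<Rightarrow> bool" where
  "add_subgroup S \<longleftrightarrow> 0 \<in> S \<and> (\<forall>x\<in>S. \<forall>y\<in>S. x + y \<in> S) \<and> (\<forall>x\<in>S. - x \<in> S)"

definition generated_subgroup :: "'g::group_add set \<Rightarrow> 'g set" where
  "generated_subgroup K = \<Inter> {S. K \<subseteq> S \<and> add_subgroup S}"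

definition lcsc_cg_nondiscrete :: "'g::{topological_group_add, t2_space, second_countable_topology} itself \<Rightarrow> bool" where
  "lcsc_cg_nondiscrete _ \<longleftrightarrow>
     locally_compact_space (euclidean :: 'g topology)
   \<and> (\<exists>K::'g set. compact K \<and> generated_subgroup K = UNIV)
   \<and> \<not> (\<forall>x::'g. open {x})"

definition haar_measure :: "'g::topological_group_add measure \<Rightarrow> bool" where
  "haar_measure lam \<longleftrightarrow>
     sets lam = sets borel
   \<and> (\<forall>g. \<forall>A\<in>sets borel. emeasure lam ((\<lambda>x. g + x) ` A) = emeasure lam A)
   \<and> (\<forall>K. compact K \<longrightarrow> emeasure lam K < \<infinity>)
   \<and> (\<forall>U. open U \<and> U \<noteq> {} \<longrightarrow> emeasure lam U > 0)"

definition unimodular_haar :: "'g::topological_group_add measure \<Rightarrow> bool" where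
  "unimodular_haar lam \<longleftrightarrow> haar_measure lam
   \<and> (\<forall>g. \<forall>A\<in>sets borel. emeasure lam ((\<lambda>x. x + g) ` A) = emeasure lam A)"

definition mp_action :: "'g::group_add measure \<Rightarrow> 'w measure \<Rightarrow> ('g \<Rightarrow> 'w \<Rightarrow> 'w) \<Rightarrow> bool" where
  "mp_action lam mu act \<longleftrightarrow>
     (\<forall>g. \<forall>w\<in>space mu. act g w \<in> space mu)
   \<and> (\<forall>w\<in>space mu. act 0 w = w)
   \<and> (\<forall>g g'. \<forall>w\<in>space mu. act (g + g') w = act g (act g' w))
   \<and> (\<lambda>(g, w). act g w) \<in> measurable (lam \<Otimes>\<^sub>M mu) mu
   \<and> (\<forall>g. \<forall>A\<in>sets mu. emeasure mu (act g -` A \<inter> space mu) = emeasure mu A)"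

definition fundamental_iso :: "'g measure \<Rightarrow> 'w measure \<Rightarrow> ('g \<Rightarrow> 'w \<Rightarrow> 'w) \<Rightarrow> 'w set \<Rightarrow> 'w measure \<Rightarrow> bool" where
  "fundamental_iso lam mu act X nu \<longleftrightarrow>
     X \<in> sets mu
   \<and> space nu = X \<and> sets nu = sets (restrict_space mu X)
   \<and> emeasure nu X < \<infinity>
   \<and> bij_betw (\<lambda>(g, x). act g x) (UNIV \<times> X) (space mu)
   \<and> (\<lambda>(g, x). act g x) \<in> measurable (lam \<Otimes>\<^sub>M nu) mu
   \<and> the_inv_into (UNIV \<times> X) (\<lambda>(g, x). act g x) \<in> measurable mu (lam \<Otimes>\<^sub>M nu)
   \<and> distr (lam \<Otimes>\<^sub>M nu) mu (\<lambda>(g, x). act g x) = mu"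

definition me_coupling ::
  "'g::group_add measure \<Rightarrow> 'h::group_add measure \<Rightarrow> 'w measure \<Rightarrow>
   ('g \<Rightarrow> 'w \<Rightarrow> 'w) \<Rightarrow> ('h \<Rightarrow> 'w \<Rightarrow> 'w) \<Rightarrow> 'w set \<Rightarrow> 'w measure \<Rightarrow> 'w set \<Rightarrow> 'w measure \<Rightarrow> bool" where
  "me_coupling lamG lamH mu actG actH XG nuG XH nuH \<longleftrightarrow>
     mp_action lamG mu actG \<and> mp_action lamH mu actH
   \<and> (\<forall>g h. \<forall>w\<in>space mu. actG g (actH h w) = actH h (actG g w))
   \<and> fundamental_iso lamG mu actG XG nuG
   \<and> fundamental_iso lamH mu actH XH nuH"

definition ind_act :: "('g \<Rightarrow> 'w \<Rightarrow> 'w) \<Rightarrow> ('h \<Rightarrow> 'w \<Rightarrow> 'w) \<Rightarrow> 'w set \<Rightarrow> 'g \<Rightarrow> 'w \<Rightarrow> 'w" where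
  "ind_act actG actH XH g x = (THE y. y \<in> XH \<and> (\<exists>h. y = actH h (actG g x)))"

definition cocycle :: "('g \<Rightarrow> 'w \<Rightarrow> 'w) \<Rightarrow> ('h \<Rightarrow> 'w \<Rightarrow> 'w) \<Rightarrow> 'w set \<Rightarrow> 'g \<Rightarrow> 'w \<Rightarrow> 'h" where
  "cocycle actG actH XH g x = (THE h. actH h (actG g x) \<in> XH)"

definition return_set :: "('g \<Rightarrow> 'w \<Rightarrow> 'w) \<Rightarrow> ('h \<Rightarrow> 'w \<Rightarrow> 'w) \<Rightarrow> 'w set \<Rightarrow> 'w set \<Rightarrow> 'w \<Rightarrow> 'g set" where
  "return_set actG actH XH Y x = {g. ind_act actG actH XH g x \<in> Y}"

definition mp_map_on :: "'a measure \<Rightarrow> 'b measure \<Rightarrow> ('a \<Rightarrow> 'b) \<Rightarrow> 'a set \<Rightarrow> bool" where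
  "mp_map_on lam1 lam2 phi R \<longleftrightarrow>
     R \<in> sets lam1 \<and> phi ` R \<in> sets lam2
   \<and> phi \<in> measurable (restrict_space lam1 R) lam2
   \<and> (\<forall>E\<in>sets lam2. E \<subseteq> phi ` R \<longrightarrow> emeasure lam1 {g\<in>R. phi g \<in> E} = emeasure lam2 E)"

definition property_P1 :: "'w measure \<Rightarrow> 'w set \<Rightarrow> 'w measure \<Rightarrow> 'w set \<Rightarrow> 'w measure \<Rightarrow> bool" where
  "property_P1 mu XG nuG XH nuH \<longleftrightarrow>
     (\<exists>C::real. C > 0 \<and>
        (\<forall>A\<in>sets mu. A \<subseteq> XG \<inter> XH \<longrightarrow> emeasure nuG A = ennreal C * emeasure nuH A))
   \<and> emeasure nuG (XG \<inter> XH) > 0"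

definition property_P3 ::
  "'g measure \<Rightarrow> 'h measure \<Rightarrow> ('g \<Rightarrow> 'w \<Rightarrow> 'w) \<Rightarrow> ('h \<Rightarrow> 'w \<Rightarrow> 'w) \<Rightarrow> 'w set \<Rightarrow> 'w measure \<Rightarrow> 'w set \<Rightarrow> 'w measure \<Rightarrow> bool" where
  "property_P3 lamG lamH actG actH XG nuG XH nuH \<longleftrightarrow>
     (AE x in nuH. mp_map_on lamG lamH (\<lambda>g. cocycle actG actH XH g x)
                     (return_set actG actH XH (XG \<inter> XH) x))
   \<and> (AE x in nuG. mp_map_on lamH lamG (\<lambda>h. cocycle actH actG XG h x)
                     (return_set actH actG XG (XG \<inter> XH) x))"

definition tilde_fun :: "('h::group_add \<Rightarrow> real) \<Rightarrow> ('h \<Rightarrow> 'w \<Rightarrow> 'w) \<Rightarrow> 'w set \<Rightarrow> 'w \<Rightarrow> real" where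
  "tilde_fun f actH XH w = f (- (THE h. \<exists>y\<in>XH. w = actH h y))"

definition fiber_fun :: "('h::group_add \<Rightarrow> real) \<Rightarrow> ('g \<Rightarrow> 'w \<Rightarrow> 'w) \<Rightarrow> ('h \<Rightarrow> 'w \<Rightarrow> 'w) \<Rightarrow> 'w set \<Rightarrow> 'w \<Rightarrow> 'g \<Rightarrow> real" where
  "fiber_fun f actG actH XH x g = tilde_fun f actH XH (actG g x)"

end

theory Submission
  imports Defs
begin


lemma lc_cover:
  assumes "locally_compact_space (euclidean :: 'g::{topological_group_add, t2_space, second_countable_topology} topology)"
    and "haar_measure (lam :: 'g measure)"
  shows "sigma_finite_measure lam" and "\<exists>B\<in>sets borel. 0 < emeasure lam B \<and> emeasure lam B < \<infinity>"
proof -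
  have hm: "sets lam = sets borel" "\<And>K. compact K \<Longrightarrow> emeasure lam K < \<infinity>"
    "\<And>U. open U \<Longrightarrow> U \<noteq> {} \<Longrightarrow> emeasure lam U > 0"
    using assms(2) unfolding haar_measure_def by auto
  have lc: "\<And>x::'g. \<exists>U K. open U \<and> compact K \<and> x \<in> U \<and> U \<subseteq> K"
    using assms(1) unfolding locally_compact_space_def by auto
  define F where "F = {U::'g set. open U \<and> (\<exists>K. compact K \<and> U \<subseteq> K)}"
  have fin: "emeasure lam U < \<infinity>" if U: "U \<in> F" for U
  proof -
    obtain K where K: "compact K" "U \<subseteq> K" "open U" using U by (auto simp: F_def)
    have "emeasure lam U \<le> emeasure lam K"
    proof (rule emeasure_mono)
      show "K \<in> sets lam" using hm(1) borel_closed[OF compact_imp_closed[OF K(1)]] by simp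
    qed (rule K(2))
    with hm(2)[OF K(1)] show ?thesis by simp
  qed
  have UF: "\<Union>F = UNIV" using lc unfolding F_def by blast
  obtain F' where F': "F' \<subseteq> F" "countable F'" "\<Union>F' = \<Union>F"
    using Lindelof[of F] F_def by auto
  show "sigma_finite_measure lam"
  proof
    show "\<exists>A. countable A \<and> A \<subseteq> sets lam \<and> \<Union> A = space lam \<and> (\<forall>a\<in>A. emeasure lam a \<noteq> \<infinity>)"
    proof (intro exI conjI)
      show "countable F'" by fact
      have sp: "space lam = UNIV" using sets_eq_imp_space_eq[OF hm(1)] by simp
      show "F' \<subseteq> sets lam" using F'(1) hm(1) unfolding F_def by auto
      show "\<Union> F' = space lam" using F'(3) UF sp by simp
      show "\<forall>a\<in>F'. emeasure lam a \<noteq> \<infinity>" using F'(1) fin by (metis less_irrefl subsetD)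
    qed
  qed
  obtain U K where UK: "open U" "compact K" "(0::'g) \<in> U" "U \<subseteq> K" using lc by blast
  hence "U \<in> F" unfolding F_def by auto
  thus "\<exists>B\<in>sets borel. 0 < emeasure lam B \<and> emeasure lam B < \<infinity>"
  proof (intro bexI conjI)
    show "U \<in> sets borel" using UK(1) by auto
    show "0 < emeasure lam U" using hm(3)[of U] UK by auto
    show "emeasure lam U < \<infinity>" using fin \<open>U \<in> F\<close> by blast
  qed
qed

lemma cont_meas:
  assumes "sets M = sets borel" "sets N = sets borel" "continuous_on UNIV f"
  shows "f \<in> measurable M N"
  using borel_measurable_continuous_onI[OF assms(3)]
  by (simp add: measurable_cong_sets[OF assms(1,2)])

lemma haar_left:
  fixes lam :: "'g::{topological_group_add, t2_space, second_countable_topology} measure"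
  assumes "haar_measure lam" "h \<in> borel_measurable borel"
  shows "(\<integral>\<^sup>+x. h (a + x) \<partial>lam) = (\<integral>\<^sup>+x. h x \<partial>lam)"
proof -
  have hm: "sets lam = sets borel" "\<And>g A. A \<in> sets borel \<Longrightarrow> emeasure lam ((\<lambda>x. g + x) ` A) = emeasure lam A"
    using assms(1) unfolding haar_measure_def by auto
  have sp: "space lam = UNIV" using sets_eq_imp_space_eq[OF hm(1)] by simp
  have T: "(\<lambda>x. a + x) \<in> measurable lam lam"
    by (rule cont_meas[OF hm(1) hm(1)]) (intro continuous_intros)
  have D: "distr lam lam (\<lambda>x. a + x) = lam"
  proof (rule measure_eqI)
    fix A assume A: "A \<in> sets (distr lam lam (\<lambda>x. a + x))"
    hence A': "A \<in> sets borel" using hm(1) by simp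
    have "(\<lambda>x. a + x) -` A \<inter> space lam = (\<lambda>x. - a + x) ` A"
    proof (intro set_eqI iffI)
      fix x assume "x \<in> (\<lambda>x. a + x) -` A \<inter> space lam"
      hence "a + x \<in> A" by simp
      thus "x \<in> (\<lambda>x. - a + x) ` A" by (rule rev_image_eqI) simp
    qed (auto simp: sp)
    thus "emeasure (distr lam lam (\<lambda>x. a + x)) A = emeasure lam A"
      using A T hm(2)[OF A'] by (simp add: emeasure_distr)
  qed simp
  have hl: "h \<in> borel_measurable lam" by (subst measurable_cong_sets[OF hm(1) refl]) (rule assms(2))
  have "(\<integral>\<^sup>+x. h x \<partial>lam) = (\<integral>\<^sup>+x. h x \<partial>distr lam lam (\<lambda>x. a + x))" using D by simp
  also have "\<dots> = (\<integral>\<^sup>+x. h (a + x) \<partial>lam)" by (rule nn_integral_distr[OF T]) (use hl in simp)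
  finally show ?thesis by simp
qed

lemma haar_right:
  fixes lam :: "'g::{topological_group_add, t2_space, second_countable_topology} measure"
  assumes "unimodular_haar lam" "h \<in> borel_measurable borel"
  shows "(\<integral>\<^sup>+x. h (x + a) \<partial>lam) = (\<integral>\<^sup>+x. h x \<partial>lam)"
proof -
  have hm: "sets lam = sets borel" "\<And>g A. A \<in> sets borel \<Longrightarrow> emeasure lam ((\<lambda>x. x + g) ` A) = emeasure lam A"
    using assms(1) unfolding unimodular_haar_def haar_measure_def by auto
  have sp: "space lam = UNIV" using sets_eq_imp_space_eq[OF hm(1)] by simp
  have T: "(\<lambda>x. x + a) \<in> measurable lam lam"
    by (rule cont_meas[OF hm(1) hm(1)]) (intro continuous_intros)
  have D: "distr lam lam (\<lambda>x. x + a) = lam"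
  proof (rule measure_eqI)
    fix A assume A: "A \<in> sets (distr lam lam (\<lambda>x. x + a))"
    hence A': "A \<in> sets borel" using hm(1) by simp
    have "(\<lambda>x. x + a) -` A \<inter> space lam = (\<lambda>x. x + - a) ` A"
    proof (intro set_eqI iffI)
      fix x assume "x \<in> (\<lambda>x. x + a) -` A \<inter> space lam"
      hence "x + a \<in> A" by simp
      thus "x \<in> (\<lambda>x. x + - a) ` A" by (rule rev_image_eqI) (simp add: add.assoc)
    qed (auto simp: sp add.assoc)
    thus "emeasure (distr lam lam (\<lambda>x. x + a)) A = emeasure lam A"
      using A T hm(2)[OF A', of "- a"] by (simp add: emeasure_distr del: diff_conv_add_uminus add_uminus_conv_diff)
  qed simp
  have hl: "h \<in> borel_measurable lam" by (subst measurable_cong_sets[OF hm(1) refl]) (rule assms(2))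
  have "(\<integral>\<^sup>+x. h x \<partial>lam) = (\<integral>\<^sup>+x. h x \<partial>distr lam lam (\<lambda>x. x + a))" using D by simp
  also have "\<dots> = (\<integral>\<^sup>+x. h (x + a) \<partial>lam)" by (rule nn_integral_distr[OF T]) (use hl in simp)
  finally show ?thesis by simp
qed

lemma meas_uminus[measurable (raw)]:
  fixes f :: "'a \<Rightarrow> 'g::{topological_group_add, second_countable_topology}"
  assumes "f \<in> borel_measurable M"
  shows "(\<lambda>x. - f x) \<in> borel_measurable M"
proof -
  have "uminus \<in> borel_measurable (borel :: 'g measure)"
    by (rule borel_measurable_continuous_onI) (intro continuous_intros)
  from measurable_compose[OF assms this] show ?thesis by (simp add: o_def)
qed

lemma meas_diff[measurable (raw)]:
  fixes f g :: "'a \<Rightarrow> 'g::{topological_group_add, second_countable_topology}"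
  assumes "f \<in> borel_measurable M" "g \<in> borel_measurable M"
  shows "(\<lambda>x. f x - g x) \<in> borel_measurable M"
  using borel_measurable_add[OF assms(1) meas_uminus[OF assms(2)]] by simp

lemma haar_inv:
  fixes lam :: "'g::{topological_group_add, t2_space, second_countable_topology} measure"
  assumes U: "unimodular_haar lam" and sf: "sigma_finite_measure lam"
    and B[measurable]: "B \<in> sets borel" and B0: "0 < emeasure lam B" and Bf: "emeasure lam B < \<infinity>"
    and g[measurable]: "g \<in> borel_measurable borel"
  shows "(\<integral>\<^sup>+x. g (- x) \<partial>lam) = (\<integral>\<^sup>+x. g x \<partial>lam)"
proof -
  have H: "haar_measure lam" using U unfolding unimodular_haar_def by auto
  have hm: "sets lam = sets borel" using H unfolding haar_measure_def by auto
  interpret P: pair_sigma_finite lam lam using sf unfolding pair_sigma_finite_def by auto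
  have mc: "measurable (lam \<Otimes>\<^sub>M lam) N = measurable (borel \<Otimes>\<^sub>M borel) N" for N :: "ennreal measure"
    by (rule measurable_cong_sets) (simp_all add: hm)
  have ml: "measurable lam N = measurable borel N" for N :: "ennreal measure"
    by (rule measurable_cong_sets) (simp_all add: hm)
  define \<phi> :: "'g \<Rightarrow> ennreal" where "\<phi> = indicator B"
  have phim[measurable]: "\<phi> \<in> borel_measurable borel" unfolding \<phi>_def by measurable
  have Iphi: "(\<integral>\<^sup>+x. \<phi> x \<partial>lam) = emeasure lam B"
    unfolding \<phi>_def by (rule nn_integral_indicator) (simp add: hm)
  have "(\<integral>\<^sup>+x. \<phi> x \<partial>lam) * (\<integral>\<^sup>+y. g y \<partial>lam) = (\<integral>\<^sup>+y. (\<integral>\<^sup>+x. \<phi> x \<partial>lam) * g y \<partial>lam)"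
    by (rule nn_integral_cmult[symmetric]) (unfold ml, measurable)
  also have "\<dots> = (\<integral>\<^sup>+y. (\<integral>\<^sup>+x. \<phi> (y + x) * g y \<partial>lam) \<partial>lam)"
  proof (rule nn_integral_cong)
    fix y
    have "(\<integral>\<^sup>+x. \<phi> (y + x) * g y \<partial>lam) = (\<integral>\<^sup>+x. \<phi> (y + x) \<partial>lam) * g y"
      by (rule nn_integral_multc) (unfold ml, measurable)
    also have "\<dots> = (\<integral>\<^sup>+x. \<phi> x \<partial>lam) * g y"
      using haar_left[OF H phim, of y] by simp
    finally show "(\<integral>\<^sup>+x. \<phi> x \<partial>lam) * g y = (\<integral>\<^sup>+x. \<phi> (y + x) * g y \<partial>lam)" by simp
  qed
  also have "\<dots> = (\<integral>\<^sup>+x. (\<integral>\<^sup>+y. \<phi> (y + x) * g y \<partial>lam) \<partial>lam)"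
    by (rule P.Fubini') (unfold mc, measurable)
  also have "\<dots> = (\<integral>\<^sup>+x. (\<integral>\<^sup>+y. \<phi> y * g (y - x) \<partial>lam) \<partial>lam)"
  proof (rule nn_integral_cong)
    fix x
    have "(\<integral>\<^sup>+y. \<phi> ((y - x) + x) * g (y - x) \<partial>lam) = (\<integral>\<^sup>+y. \<phi> (y + x) * g y \<partial>lam)"
    proof -
      have m: "(\<lambda>y. \<phi> (y + x) * g y) \<in> borel_measurable borel" by measurable
      show ?thesis using haar_right[OF U m, of "- x"] by (simp add: add.assoc)
    qed
    thus "(\<integral>\<^sup>+y. \<phi> (y + x) * g y \<partial>lam) = (\<integral>\<^sup>+y. \<phi> y * g (y - x) \<partial>lam)" by simp
  qed
  also have "\<dots> = (\<integral>\<^sup>+y. (\<integral>\<^sup>+x. \<phi> y * g (y - x) \<partial>lam) \<partial>lam)"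
    by (rule P.Fubini'[symmetric]) (unfold mc, measurable)
  also have "\<dots> = (\<integral>\<^sup>+y. \<phi> y * (\<integral>\<^sup>+x. g (- x) \<partial>lam) \<partial>lam)"
  proof (rule nn_integral_cong)
    fix y
    have "(\<integral>\<^sup>+x. \<phi> y * g (y - x) \<partial>lam) = \<phi> y * (\<integral>\<^sup>+x. g (y - x) \<partial>lam)"
      by (rule nn_integral_cmult) (unfold ml, measurable)
    also have "(\<integral>\<^sup>+x. g (y - x) \<partial>lam) = (\<integral>\<^sup>+x. g (y - (x + y)) \<partial>lam)"
    proof -
      have m: "(\<lambda>x. g (y - x)) \<in> borel_measurable borel" by measurable
      show ?thesis using haar_right[OF U m, of y] by simp
    qed
    also have "\<dots> = (\<integral>\<^sup>+x. g (- x) \<partial>lam)"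
    proof (rule nn_integral_cong)
      fix x
      have "y - (x + y) = - x" by (metis add_minus_cancel diff_conv_add_uminus minus_add)
      thus "g (y - (x + y)) = g (- x)" by simp
    qed
    finally show "(\<integral>\<^sup>+x. \<phi> y * g (y - x) \<partial>lam) = \<phi> y * (\<integral>\<^sup>+x. g (- x) \<partial>lam)" .
  qed
  also have "\<dots> = (\<integral>\<^sup>+x. \<phi> x \<partial>lam) * (\<integral>\<^sup>+x. g (- x) \<partial>lam)"
    by (rule nn_integral_multc) (unfold ml, measurable)
  finally have "emeasure lam B * (\<integral>\<^sup>+x. g x \<partial>lam) = emeasure lam B * (\<integral>\<^sup>+x. g (- x) \<partial>lam)"
    unfolding Iphi .
  thus ?thesis using B0 Bf by (auto simp add: ennreal_mult_cancel_left)
qed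



lemma tilde_at:
  assumes bij: "bij_betw (\<lambda>(h, x). actH h x) (UNIV \<times> XH) S" and y: "y \<in> XH"
  shows "tilde_fun f actH XH (actH h y) = f (- h)"
proof -
  have inj: "inj_on (\<lambda>(h, x). actH h x) (UNIV \<times> XH)" using bij by (rule bij_betw_imp_inj_on)
  have "(THE h'. \<exists>y'\<in>XH. actH h y = actH h' y') = h"
  proof (rule the_equality)
    show "\<exists>y'\<in>XH. actH h y = actH h y'" using y by blast
  next
    fix h' assume "\<exists>y'\<in>XH. actH h y = actH h' y'"
    then obtain y' where y': "y' \<in> XH" "actH h y = actH h' y'" by blast
    have "(h', y') = (h, y)"
      using inj_onD[OF inj, of "(h', y')" "(h, y)"] y y' by auto
    thus "h' = h" by simp
  qed
  thus ?thesis unfolding tilde_fun_def by simp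
qed

lemma tilde_eq:
  assumes bij: "bij_betw (\<lambda>(h, x). actH h x) (UNIV \<times> XH) S" and w: "w \<in> S"
  shows "tilde_fun f actH XH w = f (- fst (the_inv_into (UNIV \<times> XH) (\<lambda>(h, x). actH h x) w))"
proof -
  define q where "q = the_inv_into (UNIV \<times> XH) (\<lambda>(h, x). actH h x) w"
  have q: "q \<in> UNIV \<times> XH" unfolding q_def
    using bij_betwE[OF bij_betw_the_inv_into[OF bij]] w by blast
  have "(\<lambda>(h, x). actH h x) q = w" unfolding q_def
    by (rule f_the_inv_into_f_bij_betw[OF bij w])
  hence w': "w = actH (fst q) (snd q)" by (cases q) auto
  have "tilde_fun f actH XH w = f (- fst q)"
    using tilde_at[OF bij, of "snd q" f "fst q"] q w' by auto
  thus ?thesis by (simp add: q_def)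
qed

theorem mainTheorem10:
  fixes lamG :: "'g::{topological_group_add, t2_space, second_countable_topology} measure"
    and lamH :: "'h::{topological_group_add, t2_space, second_countable_topology} measure"
    and mu :: "'w measure"
    and actG :: "'g \<Rightarrow> 'w \<Rightarrow> 'w" and actH :: "'h \<Rightarrow> 'w \<Rightarrow> 'w"
    and XG XH :: "'w set" and nuG nuH :: "'w measure"
  assumes "lcsc_cg_nondiscrete TYPE('g)" and "lcsc_cg_nondiscrete TYPE('h)"
    and "unimodular_haar lamG" and "unimodular_haar lamH"
    and "me_coupling lamG lamH mu actG actH XG nuG XH nuH"
    and "property_P1 mu XG nuG XH nuH"
    and "property_P3 lamG lamH actG actH XG nuG XH nuH"
  shows "\<exists>K'::real. K' > 0 \<and>
    (\<forall>(p::real) (f::'h \<Rightarrow> real). p \<ge> 1 \<longrightarrow> f \<in> borel_measurable lamH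
       \<longrightarrow> (\<integral>\<^sup>+ h. ennreal (\<bar>f h\<bar> powr p) \<partial>lamH) < \<infinity>
       \<longrightarrow> emeasure lamH {h. f h \<noteq> 0} < \<infinity>
       \<longrightarrow> (\<integral>\<^sup>+ x. (\<integral>\<^sup>+ g. ennreal (\<bar>fiber_fun f actG actH XH x g\<bar> powr p) \<partial>lamG) \<partial>nuG)
           \<ge> ennreal K' * (\<integral>\<^sup>+ h. ennreal (\<bar>f h\<bar> powr p) \<partial>lamH))"
proof -
  note cpl = assms(5)[unfolded me_coupling_def]
  have fG: "fundamental_iso lamG mu actG XG nuG" and fH: "fundamental_iso lamH mu actH XH nuH"
    using cpl by auto
  let ?PG = "\<lambda>(g, x). actG g x" and ?PH = "\<lambda>(h, x). actH h x"
  have XGm: "XG \<in> sets mu" and spG: "space nuG = XG" and nuGf: "emeasure nuG XG < \<infinity>"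
    and PGm: "?PG \<in> measurable (lamG \<Otimes>\<^sub>M nuG) mu"
    and DG: "distr (lamG \<Otimes>\<^sub>M nuG) mu ?PG = mu"
    using fG unfolding fundamental_iso_def by auto
  have XHm: "XH \<in> sets mu" and spH: "space nuH = XH" and nuHf: "emeasure nuH XH < \<infinity>"
    and setsH: "sets nuH = sets (restrict_space mu XH)"
    and bijH: "bij_betw ?PH (UNIV \<times> XH) (space mu)"
    and PHm: "?PH \<in> measurable (lamH \<Otimes>\<^sub>M nuH) mu"
    and psiHm: "the_inv_into (UNIV \<times> XH) ?PH \<in> measurable mu (lamH \<Otimes>\<^sub>M nuH)"
    and DH: "distr (lamH \<Otimes>\<^sub>M nuH) mu ?PH = mu"
    using fH unfolding fundamental_iso_def by auto
  have lcG: "locally_compact_space (euclidean :: 'g topology)"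
    using assms(1) unfolding lcsc_cg_nondiscrete_def by auto
  have lcH: "locally_compact_space (euclidean :: 'h topology)"
    using assms(2) unfolding lcsc_cg_nondiscrete_def by auto
  have haG: "haar_measure lamG" using assms(3) unfolding unimodular_haar_def by auto
  have haH: "haar_measure lamH" using assms(4) unfolding unimodular_haar_def by auto
  have sfG: "sigma_finite_measure lamG" using lc_cover(1)[OF lcG haG] .
  have sfH: "sigma_finite_measure lamH" using lc_cover(1)[OF lcH haH] .
  obtain B where B: "B \<in> sets borel" "0 < emeasure lamH B" "emeasure lamH B < \<infinity>"
    using lc_cover(2)[OF lcH haH] by blast
  have setsLH: "sets lamH = sets borel" using haH unfolding haar_measure_def by auto
  interpret nG: finite_measure nuG by (rule finite_measureI) (use spG nuGf in simp)
  interpret nH: finite_measure nuH by (rule finite_measureI) (use spH nuHf in simp)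
  interpret PG: pair_sigma_finite lamG nuG
    unfolding pair_sigma_finite_def using sfG nG.sigma_finite_measure_axioms by auto
  interpret PH: pair_sigma_finite lamH nuH
    unfolding pair_sigma_finite_def using sfH nH.sigma_finite_measure_axioms by auto
  obtain C :: real where C: "C > 0" "\<And>A. A \<in> sets mu \<Longrightarrow> A \<subseteq> XG \<inter> XH \<Longrightarrow> emeasure nuG A = ennreal C * emeasure nuH A"
    and pos: "emeasure nuG (XG \<inter> XH) > 0"
    using assms(6) unfolding property_P1_def by blast
  have "emeasure nuH (XG \<inter> XH) \<noteq> 0"
  proof
    assume "emeasure nuH (XG \<inter> XH) = 0"
    hence "emeasure nuG (XG \<inter> XH) = 0" using C(2)[of "XG \<inter> XH"] XGm XHm by auto
    with pos show False by simp
  qed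
  moreover have "emeasure nuH (XG \<inter> XH) \<le> emeasure nuH XH"
  proof (rule emeasure_mono)
    show "XH \<in> sets nuH" using spH sets.top[of nuH] by simp
  qed auto
  ultimately have mpos: "emeasure nuH XH > 0" by (metis gr_zeroI le_zero_eq)
  define m where "m = emeasure nuH XH"
  have m: "0 < m" "m < \<infinity>" using mpos nuHf unfolding m_def by auto
  define K where "K = enn2real m"
  have K: "K > 0" "ennreal K = m" using m unfolding K_def
    by (auto simp: enn2real_positive_iff less_top[symmetric])
  show ?thesis
  proof (intro exI conjI allI impI)
    show "K > 0" by fact
    fix p :: real and f :: "'h \<Rightarrow> real"
    assume p: "1 \<le> p" and fm: "f \<in> borel_measurable lamH"
    have fb[measurable]: "f \<in> borel_measurable borel"
      using fm by (subst (asm) measurable_cong_sets[OF setsLH refl])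
    define T where "T w = ennreal (\<bar>tilde_fun f actH XH w\<bar> powr p)" for w
    have negm: "uminus \<in> measurable lamH lamH"
      by (rule cont_meas[OF setsLH setsLH]) (intro continuous_intros)
    have Fm: "(\<lambda>w. f (- fst (the_inv_into (UNIV \<times> XH) ?PH w))) \<in> borel_measurable mu"
      using measurable_compose[OF measurable_compose[OF measurable_compose[OF psiHm measurable_fst] negm] fm]
      by (simp add: o_def)
    have Tm: "T \<in> borel_measurable mu"
    proof -
      have "(\<lambda>w. ennreal (\<bar>f (- fst (the_inv_into (UNIV \<times> XH) ?PH w))\<bar> powr p)) \<in> borel_measurable mu"
        using Fm by measurable
      thus ?thesis unfolding T_def
        by (rule measurable_cong[THEN iffD1, rotated]) (simp add: tilde_eq[OF bijH])
    qed
    have "(\<integral>\<^sup>+ x. (\<integral>\<^sup>+ g. ennreal (\<bar>fiber_fun f actG actH XH x g\<bar> powr p) \<partial>lamG) \<partial>nuG)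
        = (\<integral>\<^sup>+ x. (\<integral>\<^sup>+ g. (T \<circ> ?PG) (g, x) \<partial>lamG) \<partial>nuG)"
      by (simp add: fiber_fun_def T_def)
    also have "\<dots> = integral\<^sup>N (lamG \<Otimes>\<^sub>M nuG) (T \<circ> ?PG)"
      by (rule PG.nn_integral_snd) (rule measurable_comp[OF PGm Tm])
    also have "\<dots> = integral\<^sup>N (distr (lamG \<Otimes>\<^sub>M nuG) mu ?PG) T"
      using nn_integral_distr[OF PGm, of T] Tm by (simp add: comp_def)
    also have "\<dots> = integral\<^sup>N mu T" by (simp add: DG)
    also have "\<dots> = integral\<^sup>N (distr (lamH \<Otimes>\<^sub>M nuH) mu ?PH) T" by (simp add: DH)
    also have "\<dots> = integral\<^sup>N (lamH \<Otimes>\<^sub>M nuH) (T \<circ> ?PH)"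
      using nn_integral_distr[OF PHm, of T] Tm by (simp add: comp_def)
    also have "\<dots> = (\<integral>\<^sup>+ h. (\<integral>\<^sup>+ y. (T \<circ> ?PH) (h, y) \<partial>nuH) \<partial>lamH)"
      by (rule nH.nn_integral_fst[symmetric]) (rule measurable_comp[OF PHm Tm])
    also have "\<dots> = (\<integral>\<^sup>+ h. ennreal (\<bar>f (- h)\<bar> powr p) * m \<partial>lamH)"
    proof (rule nn_integral_cong)
      fix h
      have "(\<integral>\<^sup>+ y. (T \<circ> ?PH) (h, y) \<partial>nuH) = (\<integral>\<^sup>+ y. ennreal (\<bar>f (- h)\<bar> powr p) \<partial>nuH)"
        by (rule nn_integral_cong) (simp add: T_def tilde_at[OF bijH] spH)
      thus "(\<integral>\<^sup>+ y. (T \<circ> ?PH) (h, y) \<partial>nuH) = ennreal (\<bar>f (- h)\<bar> powr p) * m"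
        by (simp add: spH m_def)
    qed
    also have "\<dots> = (\<integral>\<^sup>+ h. ennreal (\<bar>f (- h)\<bar> powr p) \<partial>lamH) * m"
      by (rule nn_integral_multc) (subst measurable_cong_sets[OF setsLH refl], measurable)
    also have "(\<integral>\<^sup>+ h. ennreal (\<bar>f (- h)\<bar> powr p) \<partial>lamH) = (\<integral>\<^sup>+ h. ennreal (\<bar>f h\<bar> powr p) \<partial>lamH)"
      by (rule haar_inv[OF assms(4) sfH B, of "\<lambda>h. ennreal (\<bar>f h\<bar> powr p)"]) measurable
    finally show "(\<integral>\<^sup>+ x. (\<integral>\<^sup>+ g. ennreal (\<bar>fiber_fun f actG actH XH x g\<bar> powr p) \<partial>lamG) \<partial>nuG)
           \<ge> ennreal K * (\<integral>\<^sup>+ h. ennreal (\<bar>f h\<bar> powr p) \<partial>lamH)"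
      by (simp add: K(2) mult.commute)
  qed
qed


end
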